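(* Let $d\ge 2$, let $S^{d-1}=\{v\in\mathbb{R}^d:\|v\|=1\}$ and let $n$ be an odd positive integer. Then the map $f:(S^{d-1})^n\to\mathbb{R}^d$, $f(v_1,\dots,v_n)=v_1+\cdots+v_n$, is a fold map.
   Context: For a smooth map $f:X\to Y$ with $\dim X\ge\dim Y$, $S(f)$ denotes the set of points where $D_xf$ is not surjective and $S_k(f)$ the set where $D_xf$ has corank $k$; $S_1$ denotes the submanifold of the first jet space $J^1(X,Y)$ consisting of jets of corank one. $f$ is a fold map if $S(f)=S_1(f)$, $j^1f\pitchfork S_1$, and for every $x\in S_1(f)$ one has $T_xS_1(f)+\ker(D_xf)=T_xX$. *)

theory Defs
  imports "HOL-Analysis.Analysis"
begin

text \<open>Everything is done for embedded submanifolds X of a Euclidean space 'a and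
target Y = R^'d (represented by real^'d).\<close>

definition tangent_space :: "'a::euclidean_space set \<Rightarrow> 'a \<Rightarrow> 'a set" where
  "tangent_space M p = {v. \<exists>\<gamma> e. e > 0 \<and> \<gamma> 0 = p \<and> (\<forall>t\<in>{-e<..<e}. \<gamma> t \<in> M)
      \<and> (\<gamma> has_vector_derivative v) (at 0)}"

definition push_tangent :: "('a::euclidean_space \<Rightarrow> 'b::euclidean_space) \<Rightarrow> 'a set \<Rightarrow> 'a \<Rightarrow> 'b set" where
  "push_tangent g M p = {w. \<exists>\<gamma> e v. e > 0 \<and> \<gamma> 0 = p \<and> (\<forall>t\<in>{-e<..<e}. \<gamma> t \<in> M)
      \<and> (\<gamma> has_vector_derivative v) (at 0) \<and> ((g \<circ> \<gamma>) has_vector_derivative w) (at 0)}"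

text \<open>D_x f : T_xX \<rightarrow> R^d, as the restriction of the ambient derivative.\<close>
definition Dmap :: "('a::euclidean_space \<Rightarrow> real^'d) \<Rightarrow> 'a \<Rightarrow> 'a \<Rightarrow> real^'d" where
  "Dmap f x = frechet_derivative f (at x)"

definition corank_at :: "'a::euclidean_space set \<Rightarrow> ('a \<Rightarrow> real^'d) \<Rightarrow> 'a \<Rightarrow> nat" where
  "corank_at X f x = CARD('d) - dim (Dmap f x ` tangent_space X x)"

definition sing_set :: "'a::euclidean_space set \<Rightarrow> ('a \<Rightarrow> real^'d) \<Rightarrow> 'a set" where
  "sing_set X f = {x\<in>X. Dmap f x ` tangent_space X x \<noteq> UNIV}"

definition Sk_set :: "nat \<Rightarrow> 'a::euclidean_space set \<Rightarrow> ('a \<Rightarrow> real^'d) \<Rightarrow> 'a set" where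
  "Sk_set k X f = {x\<in>X. corank_at X f x = k}"

text \<open>First jet space J^1(X,R^d): a jet (x,y,L) with L : T_xX \<rightarrow> R^d linear, L represented
canonically by the rows A$i \<in> T_xX, L v = (\<chi> i. A$i \<bullet> v).\<close>
definition lin_of :: "'a::euclidean_space^'d \<Rightarrow> 'a \<Rightarrow> real^'d" where
  "lin_of A v = (\<chi> i. A$i \<bullet> v)"

definition J1 :: "'a::euclidean_space set \<Rightarrow> ('a \<times> (real^'d) \<times> ('a^'d)) set" where
  "J1 X = {(x, y, A). x \<in> X \<and> (\<forall>i. A$i \<in> tangent_space X x)}"

definition jet_corank :: "'a::euclidean_space set \<Rightarrow> ('a \<times> (real^'d) \<times> ('a^'d)) \<Rightarrow> nat" where
  "jet_corank X j = (case j of (x, y, A) \<Rightarrow> CARD('d) - dim (lin_of A ` tangent_space X x))"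

definition S1_jets :: "'a::euclidean_space set \<Rightarrow> ('a \<times> (real^'d) \<times> ('a^'d)) set" where
  "S1_jets X = {j \<in> J1 X. jet_corank X j = 1}"

definition jet1 :: "'a::euclidean_space set \<Rightarrow> ('a \<Rightarrow> real^'d) \<Rightarrow> 'a \<Rightarrow> 'a \<times> (real^'d) \<times> ('a^'d)" where
  "jet1 X f x = (x, f x, THE A. (\<forall>i. A$i \<in> tangent_space X x) \<and>
       (\<forall>v\<in>tangent_space X x. lin_of A v = Dmap f x v))"

definition fold_map :: "'a::euclidean_space set \<Rightarrow> ('a \<Rightarrow> real^'d) \<Rightarrow> bool" where
  "fold_map X f \<longleftrightarrow>
     sing_set X f = Sk_set 1 X f
   \<and> (\<forall>x\<in>X. jet1 X f x \<in> S1_jets X \<longrightarrow>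
        {a + b | a b. a \<in> push_tangent (jet1 X f) X x \<and> b \<in> tangent_space (S1_jets X) (jet1 X f x)}
        = tangent_space (J1 X) (jet1 X f x))
   \<and> (\<forall>x\<in>Sk_set 1 X f.
        {a + b | a b. a \<in> tangent_space (Sk_set 1 X f) x \<and>
                       b \<in> {v \<in> tangent_space X x. Dmap f x v = 0}}
        = tangent_space X x)"

end

theory Submission
  imports Defs
begin

lemma vec_lambda_has_vector_derivative:
  fixes g :: "'n::finite \<Rightarrow> real \<Rightarrow> 'b::euclidean_space"
  assumes "\<And>k. (g k has_vector_derivative g' k) (at t)"
  shows "((\<lambda>s. \<chi> k. g k s) has_vector_derivative (\<chi> k. g' k)) (at t)"
proof -
  have eq: "\<And>h :: 'n \<Rightarrow> 'b. (\<chi> k. h k) = (\<Sum>k\<in>UNIV. (\<chi> j. if j = k then h k else 0))"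
    by (simp add: vec_eq_iff sum_component)
  have bl: "\<And>k. bounded_linear (\<lambda>x::'b. (\<chi> j::'n. if j = k then x else 0))"
    by (auto simp: linear_conv_bounded_linear[symmetric] vec_eq_iff intro!: linearI)
  have "((\<lambda>s. \<Sum>k\<in>UNIV. (\<chi> j. if j = k then g k s else 0)) has_vector_derivative
          (\<Sum>k\<in>UNIV. (\<chi> j. if j = k then g' k else 0))) (at t)"
    apply (rule has_vector_derivative_sum)
    using bounded_linear.has_vector_derivative[OF bl assms] by simp
  then show ?thesis by (subst (1 2) eq) 
qed

definition curv :: "real^'d^'n \<Rightarrow> real^'d^'n \<Rightarrow> real \<Rightarrow> real^'d^'n" where
 "curv p v t = (\<chi> k. (1 / sqrt (1 + t^2 * (norm (v$k))^2)) *\<^sub>R (p$k + t *\<^sub>R v$k))"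

lemma curv0[simp]: "curv p v 0 = p"
  by (simp add: curv_def vec_eq_iff)

lemma scal_deriv: "((\<lambda>t. 1 / sqrt (1 + t^2 * c)) has_real_derivative 0) (at 0)"
proof -
  have d1: "((\<lambda>t. 1 + t*t * c) has_real_derivative 0) (at 0)"
    using DERIV_mult[OF DERIV_ident DERIV_ident, of 0] 
    by (auto intro!: derivative_eq_intros)
  have d2: "((\<lambda>t. sqrt (1 + t*t * c)) has_real_derivative 0) (at 0)"
  proof -
    have s: "(sqrt has_real_derivative inverse (sqrt 1)/2) (at (1 + 0*0*c))" using DERIV_real_sqrt[of 1] by simp
    show ?thesis using DERIV_chain'[OF d1 s] by simp
  qed
  have "((\<lambda>t. inverse (sqrt (1 + t*t * c))) has_real_derivative 0) (at 0)"
    using DERIV_inverse_fun[OF d2] by simp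
  then show ?thesis by (simp add: power2_eq_square divide_inverse)
qed

lemma line_deriv: "((\<lambda>t. p + t *\<^sub>R (v::'a::real_normed_vector)) has_vector_derivative v) (at t)"
  by (auto intro!: derivative_eq_intros)

lemma curv_deriv: "(curv p v has_vector_derivative v) (at 0)"
proof -
  have "\<And>k. ((\<lambda>t. (1 / sqrt (1 + t^2 * (norm (v$k))^2)) *\<^sub>R (p$k + t *\<^sub>R v$k)) has_vector_derivative
         (1 / sqrt (1 + 0^2 * (norm (v$k))^2)) *\<^sub>R v$k + 0 *\<^sub>R (p$k + 0 *\<^sub>R v$k)) (at 0)"
    by (rule has_vector_derivative_scaleR[OF scal_deriv line_deriv])
  then have "\<And>k. ((\<lambda>t. (1 / sqrt (1 + t^2 * (norm (v$k))^2)) *\<^sub>R (p$k + t *\<^sub>R v$k)) has_vector_derivative v$k) (at 0)"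
    by simp
  from vec_lambda_has_vector_derivative[of "\<lambda>k t. (1 / sqrt (1 + t^2 * (norm (v$k))^2)) *\<^sub>R (p$k + t *\<^sub>R v$k)" "\<lambda>k. v$k", OF this] show ?thesis
    unfolding curv_def by simp
qed

lemma curv_norm:
  assumes "norm (p$k) = 1" "p$k \<bullet> v$k = 0"
  shows "norm (curv p v t $ k) = 1"
proof -
  have pp: "p$k \<bullet> p$k = 1" using assms(1) by (simp add: norm_eq_1)
  have "(norm (p$k + t *\<^sub>R v$k))^2 = (p$k + t *\<^sub>R v$k) \<bullet> (p$k + t *\<^sub>R v$k)"
    by (rule power2_norm_eq_inner)
  also have "\<dots> = p$k \<bullet> p$k + 2*t*(p$k \<bullet> v$k) + t^2 * (v$k \<bullet> v$k)"
    by (simp add: inner_add_left inner_add_right inner_commute power2_eq_square algebra_simps)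
  also have "\<dots> = 1 + t^2 * (norm (v$k))^2"
    using pp assms(2) by (simp add: power2_norm_eq_inner)
  finally have "(norm (p$k + t *\<^sub>R v$k))^2 = 1 + t^2 * (norm (v$k))^2" .
  then have "norm (p$k + t *\<^sub>R v$k) = sqrt (1 + t^2 * (norm (v$k))^2)"
    by (metis norm_ge_zero real_sqrt_unique)
  moreover have "sqrt (1 + t^2 * (norm (v$k))^2) > 0"
    by (simp add: add_pos_nonneg)
  ultimately show ?thesis by (simp add: curv_def)
qed

lemma vd_inner:
  assumes "(f has_vector_derivative f') (at t)" "(g has_vector_derivative g') (at t)"
  shows "((\<lambda>s. f s \<bullet> g s) has_vector_derivative (f t \<bullet> g' + f' \<bullet> g t)) (at t)"
  using assms unfolding has_vector_derivative_def
  by (auto intro!: derivative_eq_intros simp: algebra_simps)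

lemma vd_nth:
  assumes "(f has_vector_derivative f') (at t)"
  shows "((\<lambda>s. f s $ k) has_vector_derivative (f' $ k)) (at t)"
  using bounded_linear.has_vector_derivative[OF bounded_linear_vec_nth assms] .

lemma vd_const_zero:
  assumes "(h has_vector_derivative D) (at 0)" "e > 0" "\<forall>t\<in>{-e<..<e}. h t = c"
  shows "D = 0"
proof -
  have "((\<lambda>t. c) has_vector_derivative D) (at 0)"
    by (rule has_vector_derivative_transform_within_open[OF assms(1), of "{-e<..<e}"])
       (use assms in auto)
  then show ?thesis using vector_derivative_unique_at has_vector_derivative_const by blast
qed

definition XS :: "(real^'d^'n) set" where "XS = {v. \<forall>i. norm (v$i) = 1}"
definition Tx :: "real^'d^'n \<Rightarrow> (real^'d^'n) set" where "Tx p = {v. \<forall>k. p$k \<bullet> v$k = 0}"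

lemma curv_XS: "p \<in> XS \<Longrightarrow> v \<in> Tx p \<Longrightarrow> curv p v t \<in> XS"
  unfolding XS_def Tx_def using curv_norm by blast

lemma tangent_XS:
  assumes "p \<in> XS" shows "tangent_space XS p = Tx p"
proof
  show "Tx p \<subseteq> tangent_space XS p"
  proof
    fix v assume v: "v \<in> Tx p"
    show "v \<in> tangent_space XS p" unfolding tangent_space_def
      by (rule CollectI, rule exI[of _ "curv p v"], rule exI[of _ 1])
         (use curv_XS[OF assms v] curv_deriv in auto)
  qed
  show "tangent_space XS p \<subseteq> Tx p"
  proof
    fix v assume "v \<in> tangent_space XS p"
    then obtain \<gamma> e where g: "e > 0" "\<gamma> 0 = p" "\<forall>t\<in>{-e<..<e}. \<gamma> t \<in> XS"
        "(\<gamma> has_vector_derivative v) (at 0)" unfolding tangent_space_def by blast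
    show "v \<in> Tx p" unfolding Tx_def
    proof (rule CollectI, rule allI)
      fix k
      have d: "((\<lambda>s. \<gamma> s $ k \<bullet> \<gamma> s $ k) has_vector_derivative (\<gamma> 0 $ k \<bullet> v $ k + v $ k \<bullet> \<gamma> 0 $ k)) (at 0)"
        by (rule vd_inner[OF vd_nth[OF g(4)] vd_nth[OF g(4)]])
      have "\<forall>t\<in>{-e<..<e}. \<gamma> t $ k \<bullet> \<gamma> t $ k = 1"
        using g(3) by (auto simp: XS_def norm_eq_1)
      from vd_const_zero[OF d g(1) this] g(2) show "p $ k \<bullet> v $ k = 0"
        by (simp add: inner_commute)
    qed
  qed
qed


abbreviation FF :: "real^'d^'n \<Rightarrow> real^'d" where "FF \<equiv> (\<lambda>v. \<Sum>i\<in>UNIV. v$i)"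

lemma lin_F: "linear (FF :: real^'d^'n \<Rightarrow> real^'d)"
  by (rule linearI) (auto simp: sum.distrib scaleR_sum_right)

lemma Dmap_F: "Dmap (FF :: real^'d^'n \<Rightarrow> real^'d) x = FF"
  unfolding Dmap_def
  by (rule frechet_derivative_at[symmetric], rule linear_imp_has_derivative[OF lin_F])

lemma subspace_Tx: "subspace (Tx p)"
  unfolding subspace_def Tx_def by (auto simp: inner_add_right)

lemma Tx_add: "a \<in> Tx p \<Longrightarrow> b \<in> Tx p \<Longrightarrow> a + b \<in> Tx p"
  unfolding Tx_def by (auto simp: inner_add_right)

lemma subspace_Im: "subspace ((FF :: real^'d^'n \<Rightarrow> real^'d) ` Tx x)"
  by (rule linear_subspace_image[OF lin_F subspace_Tx])

lemma hyp_sub_Im: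
  fixes x :: "real^'d^'n"
  assumes "x$k \<bullet> a = 0" shows "a \<in> FF ` Tx x"
proof
  let ?v = "(\<chi> j. if j = k then a else 0) :: real^'d^'n"
  show "?v \<in> Tx x" using assms by (auto simp: Tx_def)
  show "a = FF ?v" by simp
qed

lemma dim_hyp:
  fixes c :: "real^'d"
  assumes "norm c = 1" shows "dim {a. c \<bullet> a = 0} = CARD('d) - 1"
proof -
  have "c \<noteq> 0" using assms by auto
  from dim_hyperplane[OF this] show ?thesis by simp
qed

lemma Im_dim_le: "dim ((FF :: real^'d^'n \<Rightarrow> real^'d) ` Tx x) \<le> CARD('d)"
  using dim_subset_UNIV[where S="FF ` Tx x"] by simp

lemma Im_full:
  assumes "dim ((FF :: real^'d^'n \<Rightarrow> real^'d) ` Tx x) \<ge> CARD('d)"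
  shows "FF ` Tx x = UNIV"
proof -
  have "dim (FF ` Tx x) = DIM(real^'d)" using assms Im_dim_le[of x] by simp
  then have "span (FF ` Tx x) = UNIV" using dim_eq_full by blast
  then show ?thesis using subspace_Im[of x] span_eq_iff by metis
qed

lemma Im_sing:
  fixes x :: "real^'d^'n"
  assumes "x \<in> XS" "FF ` Tx x \<noteq> UNIV"
  shows "dim (FF ` Tx x) = CARD('d) - 1"
proof -
  obtain k :: 'n where True by blast
  have n1: "norm (x$k) = 1" using assms(1) by (simp add: XS_def)
  have "{a. x$k \<bullet> a = 0} \<subseteq> FF ` Tx x" using hyp_sub_Im by blast
  then have "CARD('d) - 1 \<le> dim (FF ` Tx x)" using dim_subset dim_hyp[OF n1] by metis
  moreover have "dim (FF ` Tx x) < CARD('d)" using Im_full[of x] assms(2) Im_dim_le[of x] by fastforce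
  ultimately show ?thesis by linarith
qed

lemma corank_XS:
  fixes x :: "real^'d^'n"
  assumes "x \<in> XS"
  shows "corank_at XS FF x = CARD('d) - dim (FF ` Tx x)"
  unfolding corank_at_def Dmap_F tangent_XS[OF assms] ..

lemma sing_XS: "sing_set XS (FF :: real^'d^'n \<Rightarrow> real^'d) = {x\<in>XS. FF ` Tx x \<noteq> UNIV}"
  unfolding sing_set_def Dmap_F using tangent_XS by blast

lemma cond1:
  shows "sing_set XS (FF :: real^'d^'n \<Rightarrow> real^'d) = Sk_set 1 XS FF"
proof -
  have "x \<in> sing_set XS FF \<longleftrightarrow> x \<in> Sk_set 1 XS FF" for x :: "real^'d^'n"
  proof (cases "x \<in> XS")
    case True
    have "FF ` Tx x \<noteq> UNIV \<longleftrightarrow> CARD('d) - dim (FF ` Tx x) = 1"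
    proof
      assume "FF ` Tx x \<noteq> UNIV"
      then show "CARD('d) - dim (FF ` Tx x) = 1" using Im_sing[OF True] by simp
    next
      assume a: "CARD('d) - dim (FF ` Tx x) = 1"
      show "FF ` Tx x \<noteq> UNIV"
      proof
        assume "FF ` Tx x = UNIV"
        then have "dim (FF ` Tx x) = CARD('d)" by (simp add: dim_UNIV)
        then show False using a by simp
      qed
    qed
    then show ?thesis using True by (simp add: sing_XS Sk_set_def corank_XS)
  next
    case False
    then show ?thesis by (simp add: sing_XS Sk_set_def)
  qed
  then show ?thesis by blast
qed


definition c1 :: "'a::real_inner \<Rightarrow> 'a \<Rightarrow> real \<Rightarrow> 'a" where
  "c1 p v t = (1 / sqrt (1 + t^2 * (norm v)^2)) *\<^sub>R (p + t *\<^sub>R v)"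

lemma c1_0[simp]: "c1 p v 0 = p" by (simp add: c1_def)

lemma curv_c1: "curv p v t $ k = c1 (p$k) (v$k) t"
  by (simp add: curv_def c1_def)

lemma c1_deriv: "(c1 p v has_vector_derivative v) (at 0)"
proof -
  have "((\<lambda>t. (1 / sqrt (1 + t^2 * (norm v)^2)) *\<^sub>R (p + t *\<^sub>R v)) has_vector_derivative
         (1 / sqrt (1 + 0^2 * (norm v)^2)) *\<^sub>R v + 0 *\<^sub>R (p + 0 *\<^sub>R v)) (at 0)"
    by (rule has_vector_derivative_scaleR[OF scal_deriv line_deriv])
  then show ?thesis unfolding c1_def by (simp add: fun_eq_iff)
qed

lemma c1_norm:
  fixes p v :: "'a::real_inner"
  assumes "norm p = 1" "p \<bullet> v = 0"
  shows "norm (c1 p v t) = 1"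
proof -
  have pp: "p \<bullet> p = 1" using assms(1) by (simp add: norm_eq_1)
  have "(norm (p + t *\<^sub>R v))^2 = (p + t *\<^sub>R v) \<bullet> (p + t *\<^sub>R v)"
    by (rule power2_norm_eq_inner)
  also have "\<dots> = p \<bullet> p + 2*t*(p \<bullet> v) + t^2 * (v \<bullet> v)"
    by (simp add: inner_add_left inner_add_right inner_commute power2_eq_square algebra_simps)
  also have "\<dots> = 1 + t^2 * (norm v)^2"
    using pp assms(2) by (simp add: power2_norm_eq_inner)
  finally have "(norm (p + t *\<^sub>R v))^2 = 1 + t^2 * (norm v)^2" .
  then have "norm (p + t *\<^sub>R v) = sqrt (1 + t^2 * (norm v)^2)"
    by (metis norm_ge_zero real_sqrt_unique)
  moreover have "sqrt (1 + t^2 * (norm v)^2) > 0"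
    by (simp add: add_pos_nonneg)
  ultimately show ?thesis by (simp add: c1_def)
qed

lemma par_lemma:
  fixes a b :: "'a::real_inner"
  assumes "norm a = 1" "norm b = 1" "{z. a \<bullet> z = 0} = {z. b \<bullet> z = 0}"
  shows "b = (b \<bullet> a) *\<^sub>R a \<and> (b \<bullet> a)^2 = 1"
proof -
  let ?w = "b - (b \<bullet> a) *\<^sub>R a"
  have aa: "a \<bullet> a = 1" "b \<bullet> b = 1" using assms(1,2) by (simp_all add: norm_eq_1)
  have "a \<bullet> ?w = 0" using aa by (simp add: inner_diff_right inner_commute)
  then have bw: "b \<bullet> ?w = 0" using assms(3) by blast
  then have sq: "(b \<bullet> a)^2 = 1" using aa by (simp add: inner_diff_right power2_eq_square)
  have "?w \<bullet> ?w = b \<bullet> ?w - (b \<bullet> a) * (a \<bullet> ?w)" by (simp add: inner_diff_left)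
  also have "\<dots> = 0" using bw \<open>a \<bullet> ?w = 0\<close> by simp
  finally have "?w = 0" by simp
  then show ?thesis using sq by simp
qed

lemma Sk1_struct:
  fixes x :: "real^'d^'n"
  assumes "x \<in> Sk_set 1 XS FF"
  shows "x$k = (x$k \<bullet> x$k1) *\<^sub>R x$k1 \<and> (x$k \<bullet> x$k1)^2 = 1"
proof -
  have xs: "x \<in> XS" and ne: "FF ` Tx x \<noteq> UNIV" using assms cond1[where 'd='d and 'n='n] sing_XS[where 'd='d and 'n='n] by auto
  have dI: "dim (FF ` Tx x) = CARD('d) - 1" using Im_sing[OF xs ne] .
  have H: "{a. x$j \<bullet> a = 0} = FF ` Tx x" for j
  proof (rule subspace_dim_equal)
    show "subspace {a. x$j \<bullet> a = 0}" by (rule subspace_hyperplane)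
    show "subspace (FF ` Tx x)" by (rule subspace_Im)
    show "{a. x$j \<bullet> a = 0} \<subseteq> FF ` Tx x" using hyp_sub_Im by blast
    have "norm (x$j) = 1" using xs by (simp add: XS_def)
    then show "dim (FF ` Tx x) \<le> dim {a. x$j \<bullet> a = 0}" using dim_hyp[of "x$j"] dI by simp
  qed
  have "norm (x$k) = 1" "norm (x$k1) = 1" using xs by (auto simp: XS_def)
  moreover have "{z. x$k1 \<bullet> z = 0} = {z. x$k \<bullet> z = 0}" using H[of k1] H[of k] by simp
  ultimately show ?thesis using par_lemma[of "x$k1" "x$k"] by blast
qed

lemma par_in_sing:
  fixes c :: "real^'d" and eps :: "'n::finite \<Rightarrow> real"
  assumes "norm c = 1" "\<And>k. (eps k)^2 = 1"
  shows "(\<chi> k. eps k *\<^sub>R c) \<in> Sk_set 1 XS (FF :: real^'d^'n \<Rightarrow> real^'d)"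
proof -
  let ?y = "(\<chi> k. eps k *\<^sub>R c) :: real^'d^'n"
  have ab: "\<bar>eps k\<bar> = 1" for k
  proof -
    have "eps k = 1 \<or> eps k = -1" using assms(2)[of k] power2_eq_1_iff by blast
    then show ?thesis by auto
  qed
  have ys: "?y \<in> XS" using assms(1) ab by (simp add: XS_def)
  have sub: "FF ` Tx ?y \<subseteq> {z. c \<bullet> z = 0}"
  proof
    fix z assume "z \<in> FF ` Tx ?y"
    then obtain v where v: "v \<in> Tx ?y" "z = FF v" by blast
    have "c \<bullet> v$k = 0" for k
    proof -
      have "eps k * (c \<bullet> v$k) = 0" using v(1) by (simp add: Tx_def)
      moreover have "eps k \<noteq> 0" using ab[of k] by auto
      ultimately show ?thesis by simp
    qed
    then show "z \<in> {z. c \<bullet> z = 0}" using v(2) by (simp add: inner_sum_right)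
  qed
  have "c \<notin> {z. c \<bullet> z = 0}" using assms(1) by (simp add: norm_eq_1)
  then have "FF ` Tx ?y \<noteq> UNIV" using sub by blast
  then show ?thesis using ys cond1[where 'd='d and 'n='n] sing_XS[where 'd='d and 'n='n] by auto
qed

lemma odd_sum_nz:
  fixes eps :: "'m::finite \<Rightarrow> real"
  assumes "\<And>k. eps k = 1 \<or> eps k = -1" "odd CARD('m)"
  shows "(\<Sum>k\<in>UNIV. eps k) \<noteq> 0"
proof -
  have "finite A \<Longrightarrow> \<exists>m::int. (\<Sum>k\<in>A. eps k) = of_int m \<and> (odd m \<longleftrightarrow> odd (card A))" for A :: "'m set"
  proof (induction A rule: finite_induct)
    case empty then show ?case by simp
  next
    case (insert a A)
    then obtain m where m: "(\<Sum>k\<in>A. eps k) = of_int m" "odd m \<longleftrightarrow> odd (card A)" by blast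
    have c: "card (insert a A) = Suc (card A)" "sum eps (insert a A) = eps a + sum eps A"
      using insert(1,2) by auto
    show ?case
    proof (cases "eps a = 1")
      case True
      have "sum eps (insert a A) = of_int (m+1)" using c m True by simp
      moreover have "odd (m+1) \<longleftrightarrow> odd (card (insert a A))" using c(1) m(2) by simp
      ultimately show ?thesis by blast
    next
      case False
      then have "eps a = -1" using assms(1) by blast
      then have "sum eps (insert a A) = of_int (m-1)" using c m by simp
      moreover have "odd (m-1) \<longleftrightarrow> odd (card (insert a A))" using c(1) m(2) by simp
      ultimately show ?thesis by blast
    qed
  qed
  from this[of UNIV] obtain m :: int where m: "(\<Sum>k\<in>UNIV. eps k) = of_int m" "odd m \<longleftrightarrow> odd CARD('m)"
    by auto
  have "m \<noteq> 0" using m(2) assms(2) by auto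
  then show ?thesis using m(1) by simp
qed

lemma tangent_mono: "S \<subseteq> T \<Longrightarrow> tangent_space S p \<subseteq> tangent_space T p"
  unfolding tangent_space_def by blast


lemma S_point:
  fixes x :: "real^'d^'n"
  assumes "x \<in> Sk_set 1 XS FF"
  obtains u eps where "norm u = 1" "\<And>k. x$k = eps k *\<^sub>R u" "\<And>k. eps k = 1 \<or> eps k = -1"
proof -
  obtain k1 :: 'n where True by blast
  have xs: "x \<in> XS" using assms by (simp add: Sk_set_def)
  let ?u = "x$k1"
  have "norm ?u = 1" using xs by (simp add: XS_def)
  moreover have "x$k = (x$k \<bullet> ?u) *\<^sub>R ?u" "(x$k \<bullet> ?u) = 1 \<or> (x$k \<bullet> ?u) = -1" for k
    using Sk1_struct[OF assms, of k k1] power2_eq_1_iff by blast+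
  ultimately show ?thesis by (intro that[of ?u "\<lambda>k. x$k \<bullet> ?u"]) auto
qed

lemma vd_scale_vec:
  fixes eps :: "'n::finite \<Rightarrow> real" and c :: "real \<Rightarrow> 'b::euclidean_space"
  assumes "(c has_vector_derivative a) (at 0)"
  shows "((\<lambda>t. (\<chi> k. eps k *\<^sub>R c t)) has_vector_derivative (\<chi> k. eps k *\<^sub>R a)) (at 0)"
proof -
  have "\<And>k. ((\<lambda>t. eps k *\<^sub>R c t) has_vector_derivative eps k *\<^sub>R a) (at 0)"
    using bounded_linear.has_vector_derivative[OF bounded_linear_scaleR_right assms] by blast
  from vec_lambda_has_vector_derivative[of "\<lambda>k t. eps k *\<^sub>R c t" "\<lambda>k. eps k *\<^sub>R a", OF this]
  show ?thesis .
qed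

lemma cond3:
  fixes x :: "real^'d^'n"
  assumes odd: "odd CARD('n)" and xS: "x \<in> Sk_set 1 XS FF"
  shows "{a + b | a b. a \<in> tangent_space (Sk_set 1 XS FF) x \<and>
                       b \<in> {v \<in> tangent_space XS x. Dmap FF x v = 0}} = tangent_space XS x"
proof -
  have xs: "x \<in> XS" using xS by (simp add: Sk_set_def)
  obtain u eps where u: "norm u = 1" and xe: "\<And>k. x$k = eps k *\<^sub>R u"
    and e: "\<And>k. eps k = 1 \<or> eps k = -1" using S_point[OF xS] by blast
  have e2: "(eps k)^2 = 1" for k using e[of k] by auto
  have TS: "tangent_space (Sk_set 1 XS FF) x \<subseteq> Tx x"
    using tangent_mono[of "Sk_set 1 XS FF" XS x] tangent_XS[OF xs] by (auto simp: Sk_set_def)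
  show ?thesis unfolding tangent_XS[OF xs] Dmap_F
  proof
    show "{a + b |a b. a \<in> tangent_space (Sk_set 1 XS FF) x \<and> b \<in> {v \<in> Tx x. FF v = 0}} \<subseteq> Tx x"
      using TS Tx_add by blast
  next
    show "Tx x \<subseteq> {a + b |a b. a \<in> tangent_space (Sk_set 1 XS FF) x \<and> b \<in> {v \<in> Tx x. FF v = 0}}"
    proof
      fix w assume w: "w \<in> Tx x"
      define \<sigma> where "\<sigma> = (\<Sum>k\<in>UNIV. eps k)"
      have snz: "\<sigma> \<noteq> 0" unfolding \<sigma>_def by (rule odd_sum_nz[OF e odd])
      define a0 where "a0 = (1/\<sigma>) *\<^sub>R FF w"
      have uw: "u \<bullet> w$k = 0" for k
      proof -
        have "x$k \<bullet> w$k = 0" using w by (simp add: Tx_def)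
        then have "eps k * (u \<bullet> w$k) = 0" using xe[of k] by simp
        moreover have "eps k \<noteq> 0" using e[of k] by auto
        ultimately show ?thesis by simp
      qed
      have ua: "u \<bullet> a0 = 0" unfolding a0_def using uw by (simp add: inner_sum_right)
      define A where "A = ((\<chi> k. eps k *\<^sub>R a0) :: real^'d^'n)"
      have Ain: "A \<in> tangent_space (Sk_set 1 XS FF) x"
        unfolding tangent_space_def
      proof (intro CollectI exI conjI)
        let ?g = "\<lambda>t. (\<chi> k. eps k *\<^sub>R c1 u a0 t) :: real^'d^'n"
        show "(1::real) > 0" by simp
        show "?g 0 = x" using xe by (simp add: vec_eq_iff)
        show "\<forall>t\<in>{-1<..<1}. ?g t \<in> Sk_set 1 XS FF"
          using par_in_sing[of "c1 u a0 _" eps, OF c1_norm[OF u ua] e2] by blast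
        show "(?g has_vector_derivative A) (at 0)"
          unfolding A_def by (rule vd_scale_vec[OF c1_deriv])
      qed
      define b where "b = w - A"
      have "b \<in> Tx x"
        using w ua by (simp add: b_def A_def Tx_def xe inner_diff_right)
      moreover have "FF b = 0"
      proof -
        have "FF A = \<sigma> *\<^sub>R a0" by (simp add: A_def \<sigma>_def scaleR_sum_left)
        also have "\<dots> = FF w" using snz by (simp add: a0_def)
        finally show ?thesis by (simp add: b_def sum_subtractf)
      qed
      ultimately show "w \<in> {a + b |a b. a \<in> tangent_space (Sk_set 1 XS FF) x \<and> b \<in> {v \<in> Tx x. FF v = 0}}"
      proof -
        have "w = A + b" by (simp add: b_def)
        then show ?thesis using Ain \<open>b \<in> Tx x\<close> \<open>FF b = 0\<close> by blast
      qed
    qed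
  qed
qed


definition Arow :: "real^'d^'n \<Rightarrow> (real^'d^'n)^'d" where
  "Arow x = (\<chi> i. \<chi> k. axis i 1 - (x$k$i) *\<^sub>R x$k)"

lemma Arow_T:
  assumes "x \<in> XS" shows "Arow x $ i \<in> Tx x"
proof -
  have "x$k \<bullet> x$k = 1" for k using assms by (simp add: XS_def norm_eq_1)
  then show ?thesis by (simp add: Arow_def Tx_def inner_diff_right inner_axis)
qed

lemma lin_Arow:
  assumes "v \<in> Tx x" shows "lin_of (Arow x) v = FF v"
proof -
  have "Arow x $ i \<bullet> v = (\<Sum>k\<in>UNIV. v$k$i)" for i
  proof -
    have "Arow x $ i \<bullet> v = (\<Sum>k\<in>UNIV. (axis i 1 - (x$k$i) *\<^sub>R x$k) \<bullet> v$k)"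
      by (simp add: Arow_def inner_vec_def)
    also have "\<dots> = (\<Sum>k\<in>UNIV. v$k$i)"
      using assms by (simp add: Tx_def inner_diff_left inner_axis' )
    finally show ?thesis .
  qed
  then show ?thesis by (simp add: lin_of_def vec_eq_iff sum_component)
qed

lemma jet1_XS:
  fixes x :: "real^'d^'n"
  assumes "x \<in> XS" shows "jet1 XS FF x = (x, FF x, Arow x)"
proof -
  have "(THE A. (\<forall>i. A$i \<in> tangent_space XS x) \<and>
       (\<forall>v\<in>tangent_space XS x. lin_of A v = Dmap FF x v)) = Arow x"
  proof (rule the_equality)
    show "(\<forall>i. Arow x $ i \<in> tangent_space XS x) \<and>
       (\<forall>v\<in>tangent_space XS x. lin_of (Arow x) v = Dmap FF x v)"
      using Arow_T[OF assms] by (auto simp: tangent_XS[OF assms] Dmap_F intro: lin_Arow)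
  next
    fix A :: "(real^'d^'n)^'d"
    assume a: "(\<forall>i. A$i \<in> tangent_space XS x) \<and> (\<forall>v\<in>tangent_space XS x. lin_of A v = Dmap FF x v)"
    show "A = Arow x"
    proof (subst vec_eq_iff, rule allI)
      fix i
      let ?D = "A$i - Arow x $ i"
      have DT: "?D \<in> Tx x" using a Arow_T[OF assms, of i] subspace_Tx[of x]
        by (simp add: tangent_XS[OF assms] subspace_diff)
      have "lin_of A ?D = lin_of (Arow x) ?D" using a DT lin_Arow[OF DT]
        by (simp add: tangent_XS[OF assms] Dmap_F)
      then have "A$i \<bullet> ?D = Arow x $ i \<bullet> ?D" by (simp add: lin_of_def vec_eq_iff)
      then have "?D \<bullet> ?D = 0" by (simp add: inner_diff_left)
      then show "A$i = Arow x $ i" by simp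
    qed
  qed
  then show ?thesis by (simp add: jet1_def)
qed

definition Proj :: "real^'d^'n \<Rightarrow> real^'d^'n \<Rightarrow> real^'d^'n" where
  "Proj p c = (\<chi> k. c$k - (c$k \<bullet> p$k) *\<^sub>R p$k)"

lemma Proj_T: assumes "p \<in> XS" shows "Proj p c \<in> Tx p"
proof -
  have "p$k \<bullet> p$k = 1" for k using assms by (simp add: XS_def norm_eq_1)
  then show ?thesis by (simp add: Proj_def Tx_def inner_diff_right inner_commute)
qed

lemma Proj_inner: assumes "v \<in> Tx p" shows "Proj p c \<bullet> v = c \<bullet> v"
proof -
  have "Proj p c \<bullet> v = (\<Sum>k\<in>UNIV. (Proj p c)$k \<bullet> v$k)" by (rule inner_vec_def)
  also have "\<dots> = (\<Sum>k\<in>UNIV. c$k \<bullet> v$k)"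
    by (rule sum.cong) (use assms in \<open>simp_all add: Proj_def Tx_def inner_diff_left\<close>)
  also have "\<dots> = c \<bullet> v" by (rule inner_vec_def[symmetric])
  finally show ?thesis .
qed

lemma Proj_id: assumes "c \<in> Tx p" shows "Proj p c = c"
  using assms by (simp add: Proj_def Tx_def vec_eq_iff inner_commute)

lemma comp_deriv:
  fixes c p :: "real \<Rightarrow> 'a::real_inner"
  assumes "(c has_vector_derivative c') (at 0)" "(p has_vector_derivative p') (at 0)"
  shows "((\<lambda>t. c t - (c t \<bullet> p t) *\<^sub>R p t) has_vector_derivative
            (c' - ((c 0 \<bullet> p' + c' \<bullet> p 0) *\<^sub>R p 0 + (c 0 \<bullet> p 0) *\<^sub>R p'))) (at 0)"
proof -
  have i: "((\<lambda>t. c t \<bullet> p t) has_real_derivative (c 0 \<bullet> p' + c' \<bullet> p 0)) (at 0)"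
    using vd_inner[OF assms] by (simp add: has_real_derivative_iff_has_vector_derivative)
  have "((\<lambda>t. (c t \<bullet> p t) *\<^sub>R p t) has_vector_derivative
          (c 0 \<bullet> p 0) *\<^sub>R p' + (c 0 \<bullet> p' + c' \<bullet> p 0) *\<^sub>R p 0) (at 0)"
    by (rule has_vector_derivative_scaleR[OF i assms(2)])
  from has_vector_derivative_diff[OF assms(1) this] show ?thesis by (simp add: algebra_simps)
qed


lemma proj_curve_deriv:
  fixes x z :: "real^'d^'n" and A G :: "(real^'d^'n)^'d"
  assumes "\<And>i. A$i \<in> Tx x"
  shows "((\<lambda>t. \<chi> i. Proj (curv x z t) (A$i + t *\<^sub>R G$i)) has_vector_derivative
           (\<chi> i. \<chi> k. G$i$k - (G$i$k \<bullet> x$k + A$i$k \<bullet> z$k) *\<^sub>R x$k)) (at 0)"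
proof -
  have Ax: "A$i$k \<bullet> x$k = 0" for i k using assms[of i] by (simp add: Tx_def inner_commute)
  have comp: "((\<lambda>t. (A$i$k + t *\<^sub>R G$i$k) - ((A$i$k + t *\<^sub>R G$i$k) \<bullet> c1 (x$k) (z$k) t) *\<^sub>R c1 (x$k) (z$k) t)
     has_vector_derivative (G$i$k - (G$i$k \<bullet> x$k + A$i$k \<bullet> z$k) *\<^sub>R x$k)) (at 0)" for i k
    using comp_deriv[OF line_deriv[of "A$i$k" "G$i$k"] c1_deriv[of "x$k" "z$k"]] Ax[of i k]
    by (simp add: algebra_simps inner_commute)
  have inner: "((\<lambda>t. \<chi> k. (A$i$k + t *\<^sub>R G$i$k) - ((A$i$k + t *\<^sub>R G$i$k) \<bullet> c1 (x$k) (z$k) t) *\<^sub>R c1 (x$k) (z$k) t)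
     has_vector_derivative (\<chi> k. G$i$k - (G$i$k \<bullet> x$k + A$i$k \<bullet> z$k) *\<^sub>R x$k)) (at 0)" for i
    by (rule vec_lambda_has_vector_derivative[of "\<lambda>k t. (A$i$k + t *\<^sub>R G$i$k) - ((A$i$k + t *\<^sub>R G$i$k) \<bullet> c1 (x$k) (z$k) t) *\<^sub>R c1 (x$k) (z$k) t", OF comp])
  have outer: "((\<lambda>t. \<chi> i. \<chi> k. (A$i$k + t *\<^sub>R G$i$k) - ((A$i$k + t *\<^sub>R G$i$k) \<bullet> c1 (x$k) (z$k) t) *\<^sub>R c1 (x$k) (z$k) t)
     has_vector_derivative (\<chi> i. \<chi> k. G$i$k - (G$i$k \<bullet> x$k + A$i$k \<bullet> z$k) *\<^sub>R x$k)) (at 0)"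
    by (rule vec_lambda_has_vector_derivative[of "\<lambda>i t. \<chi> k. (A$i$k + t *\<^sub>R G$i$k) - ((A$i$k + t *\<^sub>R G$i$k) \<bullet> c1 (x$k) (z$k) t) *\<^sub>R c1 (x$k) (z$k) t", OF inner])
  have eq: "(\<lambda>t. \<chi> i. Proj (curv x z t) (A$i + t *\<^sub>R G$i)) =
     (\<lambda>t. \<chi> i. \<chi> k. (A$i$k + t *\<^sub>R G$i$k) - ((A$i$k + t *\<^sub>R G$i$k) \<bullet> c1 (x$k) (z$k) t) *\<^sub>R c1 (x$k) (z$k) t)"
    by (simp add: Proj_def curv_c1 fun_eq_iff vec_eq_iff)
  show ?thesis unfolding eq by (rule outer)
qed

definition Vset :: "real^'d^'n \<Rightarrow> (real^'d^'n)^'d \<Rightarrow> ((real^'d^'n) \<times> (real^'d) \<times> ((real^'d^'n)^'d)) set" where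
  "Vset x A = {(w, y', B). w \<in> Tx x \<and> (\<forall>i k. B$i$k \<bullet> x$k + A$i$k \<bullet> w$k = 0)}"

lemma Vset_add:
  assumes "a \<in> Vset x A" "b \<in> Vset x A" shows "a + b \<in> Vset x A"
proof -
  obtain w1 y1 B1 w2 y2 B2 where ab: "a = (w1, y1, B1)" "b = (w2, y2, B2)" by (cases a, cases b) auto
  have 1: "w1 \<in> Tx x" "\<And>i k. B1$i$k \<bullet> x$k + A$i$k \<bullet> w1$k = 0"
    and 2: "w2 \<in> Tx x" "\<And>i k. B2$i$k \<bullet> x$k + A$i$k \<bullet> w2$k = 0"
    using assms ab by (auto simp: Vset_def)
  have "(B1 + B2)$i$k \<bullet> x$k + A$i$k \<bullet> (w1 + w2)$k = 0" for i k
    using 1(2)[of i k] 2(2)[of i k] by (simp add: inner_add_left inner_add_right)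
  then show ?thesis using ab Tx_add[OF 1(1) 2(1)] by (simp add: Vset_def)
qed

lemma J1_XS: "J1 XS = {(x, y, A). x \<in> XS \<and> (\<forall>i. A$i \<in> Tx x)}"
  unfolding J1_def using tangent_XS by fastforce

lemma vd_fst: "(f has_vector_derivative (a, b)) (at t) \<Longrightarrow> ((\<lambda>s. fst (f s)) has_vector_derivative a) (at t)"
  using bounded_linear.has_vector_derivative[OF bounded_linear_fst] by fastforce

lemma vd_snd: "(f has_vector_derivative (a, b)) (at t) \<Longrightarrow> ((\<lambda>s. snd (f s)) has_vector_derivative b) (at t)"
  using bounded_linear.has_vector_derivative[OF bounded_linear_snd] by fastforce

lemma TJ1:
  fixes x :: "real^'d^'n" and A :: "(real^'d^'n)^'d"
  assumes xs: "x \<in> XS" and A: "\<And>i. A$i \<in> Tx x"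
  shows "tangent_space (J1 XS) (x, y, A) = Vset x A"
proof
  show "tangent_space (J1 XS) (x, y, A) \<subseteq> Vset x A"
  proof
    fix V assume "V \<in> tangent_space (J1 XS) (x, y, A)"
    then obtain \<Gamma> e where g: "e > 0" "\<Gamma> 0 = (x, y, A)" "\<forall>t\<in>{-e<..<e}. \<Gamma> t \<in> J1 XS"
        "(\<Gamma> has_vector_derivative V) (at 0)" unfolding tangent_space_def by blast
    obtain w y' B where V: "V = (w, y', B)" by (cases V) auto
    have dx: "((\<lambda>t. fst (\<Gamma> t)) has_vector_derivative w) (at 0)" using vd_fst g(4) V by blast
    have dA: "((\<lambda>t. snd (snd (\<Gamma> t))) has_vector_derivative B) (at 0)"
      using vd_snd[OF vd_snd[OF g(4)[unfolded V]]] by simp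
    have inJ: "fst (\<Gamma> t) \<in> XS" "\<And>i. snd (snd (\<Gamma> t)) $ i \<in> Tx (fst (\<Gamma> t))" if "t \<in> {-e<..<e}" for t
    proof -
      have "\<Gamma> t \<in> J1 XS" using g(3) that by blast
      then show "fst (\<Gamma> t) \<in> XS" "\<And>i. snd (snd (\<Gamma> t)) $ i \<in> Tx (fst (\<Gamma> t))"
        by (cases "\<Gamma> t", auto simp: J1_XS)+
    qed
    have "w \<in> tangent_space XS x" unfolding tangent_space_def
      using g(1,2) inJ dx by (intro CollectI exI[of _ "\<lambda>t. fst (\<Gamma> t)"] exI[of _ e]) auto
    then have wT: "w \<in> Tx x" using tangent_XS[OF xs] by simp
    have "B$i$k \<bullet> x$k + A$i$k \<bullet> w$k = 0" for i k
    proof -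
      have d: "((\<lambda>t. snd (snd (\<Gamma> t))$i$k \<bullet> fst (\<Gamma> t)$k) has_vector_derivative
          (snd (snd (\<Gamma> 0))$i$k \<bullet> w$k + B$i$k \<bullet> fst (\<Gamma> 0)$k)) (at 0)"
        by (rule vd_inner[OF vd_nth[OF vd_nth[OF dA]] vd_nth[OF dx]])
      have "\<forall>t\<in>{-e<..<e}. snd (snd (\<Gamma> t))$i$k \<bullet> fst (\<Gamma> t)$k = 0"
        using inJ by (auto simp: Tx_def inner_commute)
      from vd_const_zero[OF d g(1) this] g(2) show ?thesis by simp
    qed
    then show "V \<in> Vset x A" using wT V by (simp add: Vset_def)
  qed
next
  show "Vset x A \<subseteq> tangent_space (J1 XS) (x, y, A)"
  proof
    fix V assume "V \<in> Vset x A"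
    then obtain w y' B where V: "V = (w, y', B)" and wT: "w \<in> Tx x"
      and BC: "\<And>i k. B$i$k \<bullet> x$k + A$i$k \<bullet> w$k = 0" by (auto simp: Vset_def)
    let ?\<Gamma> = "\<lambda>t. (curv x w t, y + t *\<^sub>R y', \<chi> i. Proj (curv x w t) (A$i + t *\<^sub>R B$i))"
    have d3: "((\<lambda>t. \<chi> i. Proj (curv x w t) (A$i + t *\<^sub>R B$i)) has_vector_derivative B) (at 0)"
    proof -
      have "(\<chi> i. \<chi> k. B$i$k - (B$i$k \<bullet> x$k + A$i$k \<bullet> w$k) *\<^sub>R x$k) = B"
        using BC by (simp add: vec_eq_iff)
      then show ?thesis using proj_curve_deriv[OF A, of w B] by simp
    qed
    show "V \<in> tangent_space (J1 XS) (x, y, A)" unfolding tangent_space_def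
    proof (intro CollectI exI conjI)
      show "(1::real) > 0" by simp
      show "?\<Gamma> 0 = (x, y, A)" using Proj_id[OF A] by (simp add: vec_eq_iff)
      show "\<forall>t\<in>{-1<..<1}. ?\<Gamma> t \<in> J1 XS"
        using curv_XS[OF xs wT] Proj_T by (auto simp: J1_XS)
      show "(?\<Gamma> has_vector_derivative V) (at 0)"
        unfolding V by (intro has_vector_derivative_Pair curv_deriv line_deriv d3)
    qed
  qed
qed


lemma Arow_curve_deriv:
  fixes x v :: "real^'d^'n"
  shows "((\<lambda>t. Arow (curv x v t)) has_vector_derivative
          (\<chi> i. \<chi> k. - ((v$k$i) *\<^sub>R x$k + (x$k$i) *\<^sub>R v$k))) (at 0)"
proof -
  have comp: "((\<lambda>t. axis i 1 - (c1 (x$k) (v$k) t $ i) *\<^sub>R c1 (x$k) (v$k) t) has_vector_derivative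
      - ((v$k$i) *\<^sub>R x$k + (x$k$i) *\<^sub>R v$k)) (at 0)" for i k
  proof -
    have f: "((\<lambda>t. c1 (x$k) (v$k) t $ i) has_real_derivative v$k$i) (at 0)"
      using vd_nth[OF c1_deriv[of "x$k" "v$k"], of i]
      by (simp add: has_real_derivative_iff_has_vector_derivative)
    have "((\<lambda>t. (c1 (x$k) (v$k) t $ i) *\<^sub>R c1 (x$k) (v$k) t) has_vector_derivative
        (c1 (x$k) (v$k) 0 $ i) *\<^sub>R v$k + (v$k$i) *\<^sub>R c1 (x$k) (v$k) 0) (at 0)"
      by (rule has_vector_derivative_scaleR[OF f c1_deriv])
    from has_vector_derivative_diff[OF has_vector_derivative_const this, of "axis i 1"]
    show ?thesis by (simp add: algebra_simps)
  qed
  have inner: "((\<lambda>t. \<chi> k. axis i 1 - (c1 (x$k) (v$k) t $ i) *\<^sub>R c1 (x$k) (v$k) t) has_vector_derivative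
      (\<chi> k. - ((v$k$i) *\<^sub>R x$k + (x$k$i) *\<^sub>R v$k))) (at 0)" for i
    by (rule vec_lambda_has_vector_derivative[of "\<lambda>k t. axis i 1 - (c1 (x$k) (v$k) t $ i) *\<^sub>R c1 (x$k) (v$k) t", OF comp])
  have outer: "((\<lambda>t. \<chi> i. \<chi> k. axis i 1 - (c1 (x$k) (v$k) t $ i) *\<^sub>R c1 (x$k) (v$k) t) has_vector_derivative
      (\<chi> i. \<chi> k. - ((v$k$i) *\<^sub>R x$k + (x$k$i) *\<^sub>R v$k))) (at 0)"
    by (rule vec_lambda_has_vector_derivative[of "\<lambda>i t. \<chi> k. axis i 1 - (c1 (x$k) (v$k) t $ i) *\<^sub>R c1 (x$k) (v$k) t", OF inner])
  have eq: "(\<lambda>t. Arow (curv x v t)) = (\<lambda>t. \<chi> i. \<chi> k. axis i 1 - (c1 (x$k) (v$k) t $ i) *\<^sub>R c1 (x$k) (v$k) t)"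
    by (simp add: Arow_def curv_c1 fun_eq_iff)
  show ?thesis unfolding eq by (rule outer)
qed

lemma jet_curve_deriv:
  fixes x v :: "real^'d^'n"
  assumes xs: "x \<in> XS" and vT: "v \<in> Tx x"
  shows "((jet1 XS FF \<circ> curv x v) has_vector_derivative
           (v, FF v, \<chi> i. \<chi> k. - ((v$k$i) *\<^sub>R x$k + (x$k$i) *\<^sub>R v$k))) (at 0)"
proof -
  have eq: "jet1 XS FF \<circ> curv x v = (\<lambda>t. (curv x v t, FF (curv x v t), Arow (curv x v t)))"
    using jet1_XS[OF curv_XS[OF xs vT]] by (simp add: fun_eq_iff)
  have bl: "bounded_linear (FF :: real^'d^'n \<Rightarrow> real^'d)"
    using lin_F linear_conv_bounded_linear by blast
  show ?thesis unfolding eq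
    by (intro has_vector_derivative_Pair curv_deriv Arow_curve_deriv
          bounded_linear.has_vector_derivative[OF bl curv_deriv])
qed


lemma aux_eq: "(a::'a::ab_group_add) - b + d = 0 \<Longrightarrow> a = b - d"
  by (simp add: algebra_simps eq_neg_iff_add_eq_0 add_eq_0_iff)

lemma proj_norm:
  fixes q c :: "'a::real_inner"
  assumes "norm q = 1" shows "norm (c - (c \<bullet> q) *\<^sub>R q) \<le> norm c"
proof -
  have qq: "q \<bullet> q = 1" using assms by (simp add: norm_eq_1)
  have "(norm (c - (c \<bullet> q) *\<^sub>R q))^2 = (c - (c \<bullet> q) *\<^sub>R q) \<bullet> (c - (c \<bullet> q) *\<^sub>R q)"
    by (rule power2_norm_eq_inner)
  also have "\<dots> = c \<bullet> c - (c \<bullet> q)^2"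
    using qq by (simp add: inner_diff_left inner_diff_right inner_commute power2_eq_square)
  also have "\<dots> \<le> (norm c)^2" by (simp add: power2_norm_eq_inner)
  finally show ?thesis using power2_le_imp_le by fastforce
qed

definition Lmap :: "real^'d \<Rightarrow> real^'d \<Rightarrow> real \<Rightarrow> real^'d^'d \<Rightarrow> real^'d \<Rightarrow> real^'d" where
  "Lmap q \<gamma> t Gk a = (let c = a - (a \<bullet> \<gamma>) *\<^sub>R \<gamma> in
       (c - (c \<bullet> q) *\<^sub>R q) + t *\<^sub>R (\<chi> i. Gk$i \<bullet> c))"

lemma linear_Lmap: "linear (Lmap q \<gamma> t Gk)"
  by (rule linearI) (simp_all add: Lmap_def Let_def vec_eq_iff inner_add_left inner_add_right
      inner_diff_left inner_diff_right algebra_simps)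

lemma Gk_bound: "\<exists>K>0. \<forall>c. norm ((\<chi> i. Gk$i \<bullet> c) :: real^'d) \<le> norm (c::real^'d) * K"
proof -
  have "linear (\<lambda>c::real^'d. (\<chi> i. Gk$i \<bullet> c) :: real^'d)"
    by (rule linearI) (simp_all add: vec_eq_iff inner_add_right)
  then have "bounded_linear (\<lambda>c::real^'d. (\<chi> i. Gk$i \<bullet> c) :: real^'d)"
    using linear_conv_bounded_linear by blast
  then show ?thesis using bounded_linear.pos_bounded by blast
qed

lemma inj_Lmap:
  fixes q \<gamma> :: "real^'d"
  assumes q: "norm q = 1" and g: "norm \<gamma> = 1" and K: "\<forall>c. norm ((\<chi> i. Gk$i \<bullet> c) :: real^'d) \<le> norm c * K"
    and K0: "K \<ge> 0" and small: "norm (\<gamma> - q) + \<bar>t\<bar> * K < 1"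
  shows "inj_on (Lmap q \<gamma> t Gk) {a. q \<bullet> a = 0}"
proof (rule linear_inj_on_iff_eq_0[THEN iffD2])
  show "linear (Lmap q \<gamma> t Gk)" by (rule linear_Lmap)
  show "subspace {a. q \<bullet> a = 0}" by (rule subspace_hyperplane)
  show "\<forall>a\<in>{a. q \<bullet> a = 0}. Lmap q \<gamma> t Gk a = 0 \<longrightarrow> a = 0"
  proof (intro ballI impI)
    fix a assume aH: "a \<in> {a. q \<bullet> a = 0}" and L0: "Lmap q \<gamma> t Gk a = 0"
    define c where "c = a - (a \<bullet> \<gamma>) *\<^sub>R \<gamma>"
    have qa: "q \<bullet> a = 0" using aH by simp
    have cn: "norm c \<le> norm a"
      unfolding c_def by (rule proj_norm[OF g])
    have Pc: "c - (c \<bullet> q) *\<^sub>R q = a - (a \<bullet> \<gamma>) *\<^sub>R (\<gamma> - (\<gamma> \<bullet> q) *\<^sub>R q)"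
      using qa by (simp add: c_def inner_diff_left algebra_simps inner_commute)
    have "c - (c \<bullet> q) *\<^sub>R q + t *\<^sub>R (\<chi> i. Gk$i \<bullet> c) = 0"
      using L0 by (simp add: Lmap_def Let_def c_def[symmetric])
    then have "a - (a \<bullet> \<gamma>) *\<^sub>R (\<gamma> - (\<gamma> \<bullet> q) *\<^sub>R q) + t *\<^sub>R (\<chi> i. Gk$i \<bullet> c) = 0"
      using Pc by simp
    then have "a = (a \<bullet> \<gamma>) *\<^sub>R (\<gamma> - (\<gamma> \<bullet> q) *\<^sub>R q) - t *\<^sub>R (\<chi> i. Gk$i \<bullet> c)"
      by (rule aux_eq)
    then have "norm a \<le> norm ((a \<bullet> \<gamma>) *\<^sub>R (\<gamma> - (\<gamma> \<bullet> q) *\<^sub>R q)) + norm (t *\<^sub>R (\<chi> i. Gk$i \<bullet> c))"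
      by (metis norm_triangle_ineq4)
    also have "\<dots> \<le> \<bar>a \<bullet> \<gamma>\<bar> * 1 + \<bar>t\<bar> * (norm c * K)"
    proof (rule add_mono)
      show "norm ((a \<bullet> \<gamma>) *\<^sub>R (\<gamma> - (\<gamma> \<bullet> q) *\<^sub>R q)) \<le> \<bar>a \<bullet> \<gamma>\<bar> * 1"
        using proj_norm[OF q, of \<gamma>] g mult_left_mono[of "norm (\<gamma> - (\<gamma> \<bullet> q) *\<^sub>R q)" 1 "\<bar>a \<bullet> \<gamma>\<bar>"] by simp
      show "norm (t *\<^sub>R (\<chi> i. Gk$i \<bullet> c)) \<le> \<bar>t\<bar> * (norm c * K)"
        using K by (simp add: mult_left_mono)
    qed
    also have "\<dots> \<le> norm a * norm (\<gamma> - q) + \<bar>t\<bar> * (norm a * K)"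
    proof (rule add_mono)
      have "a \<bullet> \<gamma> = a \<bullet> (\<gamma> - q)" using qa by (simp add: inner_diff_right inner_commute)
      then show "\<bar>a \<bullet> \<gamma>\<bar> * 1 \<le> norm a * norm (\<gamma> - q)" using Cauchy_Schwarz_ineq2 by simp
      show "\<bar>t\<bar> * (norm c * K) \<le> \<bar>t\<bar> * (norm a * K)"
        using cn K0 by (simp add: mult_left_mono mult_right_mono)
    qed
    also have "\<dots> = norm a * (norm (\<gamma> - q) + \<bar>t\<bar> * K)" by (simp add: algebra_simps)
    finally have fin: "norm a \<le> norm a * (norm (\<gamma> - q) + \<bar>t\<bar> * K)" .
    show "a = 0"
    proof (rule ccontr)
      assume "a \<noteq> 0"
      then have pos: "norm a > 0" by simp
      have "norm a * 1 \<le> norm a * (norm (\<gamma> - q) + \<bar>t\<bar> * K)" using fin by simp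
      then have "1 \<le> norm (\<gamma> - q) + \<bar>t\<bar> * K" using mult_le_cancel_left_pos[OF pos] by blast
      then show False using small by simp
    qed
  qed
qed


lemma sum_axis: "(\<Sum>i\<in>UNIV. u$i *\<^sub>R axis i (1::real)) = (u :: real^'d)"
proof (subst vec_eq_iff, rule allI)
  fix j
  have "(\<Sum>i\<in>UNIV. u$i *\<^sub>R axis i (1::real)) $ j = (\<Sum>i\<in>UNIV. if i = j then u$j else 0)"
    unfolding sum_component by (rule sum.cong) (auto simp: axis_def)
  then show "(\<Sum>i\<in>UNIV. u$i *\<^sub>R axis i (1::real)) $ j = u $ j" by simp
qed

lemma sum_u_Arow:
  fixes x :: "real^'d^'n" and u :: "real^'d"
  assumes u: "norm u = 1" and xe: "\<And>k. x$k = eps k *\<^sub>R u" and e2: "\<And>k. (eps k)^2 = 1"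
  shows "(\<Sum>i\<in>UNIV. u$i *\<^sub>R Arow x $ i) = 0"
proof (subst vec_eq_iff, rule allI)
  fix k
  have uu: "u \<bullet> u = 1" using u by (simp add: norm_eq_1)
  have "(\<Sum>i\<in>UNIV. u$i *\<^sub>R Arow x $ i) $ k = (\<Sum>i\<in>UNIV. u$i *\<^sub>R (axis i 1 - (x$k$i) *\<^sub>R x$k))"
    by (simp add: sum_component Arow_def)
  also have "\<dots> = (\<Sum>i\<in>UNIV. u$i *\<^sub>R axis i 1) - (\<Sum>i\<in>UNIV. u$i * x$k$i) *\<^sub>R x$k"
    by (simp add: scaleR_diff_right sum_subtractf scaleR_sum_left)
  also have "\<dots> = u - (u \<bullet> x$k) *\<^sub>R x$k" by (simp add: sum_axis inner_vec_def)
  also have "\<dots> = u - ((eps k)^2 * (u \<bullet> u)) *\<^sub>R u" using xe[of k] by (simp add: power2_eq_square)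
  also have "\<dots> = 0" using e2[of k] uu by simp
  finally show "(\<Sum>i\<in>UNIV. u$i *\<^sub>R Arow x $ i) $ k = 0 $ k" by simp
qed

lemma upper_img:
  fixes M :: "(real^'d^'n)^'d" and u :: "real^'d"
  assumes "(\<Sum>i\<in>UNIV. u$i *\<^sub>R M$i) = 0"
  shows "u \<bullet> lin_of M v = 0"
proof -
  have "u \<bullet> lin_of M v = (\<Sum>i\<in>UNIV. u$i * (M$i \<bullet> v))" by (simp add: lin_of_def inner_vec_def)
  also have "\<dots> = (\<Sum>i\<in>UNIV. u$i *\<^sub>R M$i) \<bullet> v" by (simp add: inner_sum_left)
  finally show ?thesis using assms by simp
qed

lemma S1_curve:
  fixes x z :: "real^'d^'n" and G :: "(real^'d^'n)^'d" and u y0 y2 :: "real^'d"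
  assumes xs: "x \<in> XS" and u: "norm u = 1" and xe: "\<And>k. x$k = eps k *\<^sub>R u"
    and e2: "\<And>k. (eps k)^2 = 1" and zT: "z \<in> Tx x" and Gs: "(\<Sum>i\<in>UNIV. u$i *\<^sub>R G$i) = 0"
  shows "(z, y2, \<chi> i. \<chi> k. G$i$k - (G$i$k \<bullet> x$k + Arow x $i$k \<bullet> z$k) *\<^sub>R x$k)
           \<in> tangent_space (S1_jets XS) (x, y0, Arow x)"
proof -
  obtain k1 :: 'n where True by blast
  define q where "q = x$k1"
  have q: "norm q = 1" using xs by (simp add: XS_def q_def)
  define Gk where "Gk = ((\<chi> i. G$i$k1) :: real^'d^'d)"
  obtain K where K0: "K > 0" and K: "\<forall>c. norm ((\<chi> i. Gk$i \<bullet> c) :: real^'d) \<le> norm (c::real^'d) * K"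
    using Gk_bound by blast
  have "continuous (at 0) (c1 q (z$k1))" using has_vector_derivative_continuous[OF c1_deriv] .
  then obtain d where d0: "d > 0" and d: "\<And>t. dist t 0 < d \<Longrightarrow> dist (c1 q (z$k1) t) (c1 q (z$k1) 0) < 1/2"
    unfolding continuous_at_eps_delta by (metis zero_less_divide_1_iff zero_less_numeral)
  define e where "e = min d (1 / (2*K))"
  have e0: "e > 0" using d0 K0 by (simp add: e_def)
  have dimH: "dim {a. u \<bullet> a = 0} = CARD('d) - 1" by (rule dim_hyp[OF u])
  have sumA: "(\<Sum>i\<in>UNIV. u$i *\<^sub>R Arow x $ i) = 0" by (rule sum_u_Arow[OF u xe e2])
  let ?R = "\<lambda>t. (\<chi> i. Proj (curv x z t) (Arow x $ i + t *\<^sub>R G$i)) :: (real^'d^'n)^'d"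
  let ?\<Gamma> = "\<lambda>t. (curv x z t, y0 + t *\<^sub>R y2, ?R t)"
  have inS1: "?\<Gamma> t \<in> S1_jets XS" if t: "t \<in> {-e<..<e}" for t
  proof -
    let ?g = "curv x z t"
    have gs: "?g \<in> XS" by (rule curv_XS[OF xs zT])
    have rows: "\<And>i. ?R t $ i \<in> Tx ?g" using Proj_T[OF gs] by simp
    have J: "?\<Gamma> t \<in> J1 XS" using gs rows by (simp add: J1_XS)
    let ?M = "(\<chi> i. Arow x $ i + t *\<^sub>R G$i) :: (real^'d^'n)^'d"
    let ?I = "lin_of (?R t) ` Tx ?g"
    have linRM: "lin_of (?R t) v = lin_of ?M v" if "v \<in> Tx ?g" for v
      using Proj_inner[OF that] by (simp add: lin_of_def vec_eq_iff)
    have sumM: "(\<Sum>i\<in>UNIV. u$i *\<^sub>R ?M$i) = 0"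
    proof -
      have "(\<Sum>i\<in>UNIV. u$i *\<^sub>R ?M$i) = (\<Sum>i\<in>UNIV. u$i *\<^sub>R Arow x $ i) + t *\<^sub>R (\<Sum>i\<in>UNIV. u$i *\<^sub>R G$i)"
        by (simp add: scaleR_add_right sum.distrib scaleR_sum_right mult.commute)
      then show ?thesis using sumA Gs by simp
    qed
    have Isub: "?I \<subseteq> {a. u \<bullet> a = 0}"
      using linRM upper_img[OF sumM] by auto
    have up: "dim ?I \<le> CARD('d) - 1" using dim_subset[OF Isub] dimH by simp
    let ?gk = "?g $ k1"
    have gk1: "norm ?gk = 1" using gs by (simp add: XS_def)
    have gkc: "?gk = c1 q (z$k1) t" by (simp add: curv_c1 q_def)
    have tabs: "\<bar>t\<bar> < e" using t by auto
    have dt: "dist t 0 < d" using tabs by (simp add: e_def dist_real_def)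
    have near: "norm (?gk - q) < 1/2" using d[OF dt] gkc by (simp add: dist_norm)
    have tK: "\<bar>t\<bar> * K < 1/2"
    proof -
      have "\<bar>t\<bar> < 1/(2*K)" using tabs by (simp add: e_def)
      then show ?thesis using K0 by (simp add: field_simps)
    qed
    have inj: "inj_on (Lmap q ?gk t Gk) {a. q \<bullet> a = 0}"
      by (rule inj_Lmap[OF q gk1 K]) (use K0 near tK in auto)
    have qH: "{a. q \<bullet> a = 0} = {a. u \<bullet> a = 0}"
    proof -
      have "eps k1 \<noteq> 0" using e2[of k1] by auto
      then show ?thesis using xe[of k1] by (auto simp: q_def)
    qed
    have LsubI: "Lmap q ?gk t Gk ` {a. q \<bullet> a = 0} \<subseteq> ?I"
    proof
      fix b assume "b \<in> Lmap q ?gk t Gk ` {a. q \<bullet> a = 0}"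
      then obtain a where a: "q \<bullet> a = 0" "b = Lmap q ?gk t Gk a" by blast
      define c where "c = a - (a \<bullet> ?gk) *\<^sub>R ?gk"
      define V where "V = ((\<chi> k. if k = k1 then c else 0) :: real^'d^'n)"
      have gc: "?gk \<bullet> c = 0"
        using gk1 by (simp add: c_def inner_diff_right norm_eq_1 inner_commute)
      have VT: "V \<in> Tx ?g" using gc by (simp add: V_def Tx_def)
      have "lin_of (?R t) V = b"
      proof (subst vec_eq_iff, rule allI)
        fix i
        have "lin_of (?R t) V $ i = ?R t $ i \<bullet> V" by (simp add: lin_of_def)
        also have "\<dots> = (\<Sum>k\<in>UNIV. ?R t $ i $ k \<bullet> V $ k)" by (rule inner_vec_def)
        also have "\<dots> = (\<Sum>k\<in>UNIV. if k = k1 then ?R t $ i $ k1 \<bullet> c else 0)"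
          by (rule sum.cong) (simp_all add: V_def)
        also have "\<dots> = ?R t $ i $ k1 \<bullet> c" by simp
        finally have "lin_of (?R t) V $ i = ?R t $ i $ k1 \<bullet> c" .
        also have "\<dots> = ?M $ i $ k1 \<bullet> c"
          using gc by (simp add: Proj_def inner_diff_left)
        also have "\<dots> = c$i - q$i * (q \<bullet> c) + t * (G$i$k1 \<bullet> c)"
          by (simp add: Arow_def q_def inner_add_left inner_diff_left inner_axis')
        also have "\<dots> = b $ i"
          by (simp add: a(2) Lmap_def Let_def c_def[symmetric] Gk_def inner_commute algebra_simps)
        finally show "lin_of (?R t) V $ i = b $ i" .
      qed
      then show "b \<in> ?I" using VT by blast
    qed
    have "dim (Lmap q ?gk t Gk ` {a. q \<bullet> a = 0}) = dim {a. q \<bullet> a = 0}"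
    proof (rule dim_image_eq[OF linear_Lmap])
      have "span {a. q \<bullet> a = 0} = {a. q \<bullet> a = 0}"
        by (rule span_eq_iff[THEN iffD2, OF subspace_hyperplane])
      then show "inj_on (Lmap q ?gk t Gk) (span {a. q \<bullet> a = 0})" using inj by (simp only:)
    qed
    then have "dim (Lmap q ?gk t Gk ` {a. q \<bullet> a = 0}) = CARD('d) - 1"
      using dimH qH by simp
    then have lo: "CARD('d) - 1 \<le> dim ?I"
      using dim_subset[OF LsubI] by linarith
    have "jet_corank XS (?\<Gamma> t) = CARD('d) - dim ?I"
      by (simp add: jet_corank_def tangent_XS[OF gs])
    also have "\<dots> = 1"
    proof -
      have "0 < CARD('d)" by simp
      then show ?thesis using up lo by linarith
    qed
    finally show ?thesis using J by (simp add: S1_jets_def)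
  qed
  show ?thesis unfolding tangent_space_def
  proof (intro CollectI exI conjI)
    show "e > 0" by (rule e0)
    show "?\<Gamma> 0 = (x, y0, Arow x)" using Proj_id[OF Arow_T[OF xs]] by (simp add: vec_eq_iff)
    show "\<forall>t\<in>{-e<..<e}. ?\<Gamma> t \<in> S1_jets XS" using inS1 by blast
    show "(?\<Gamma> has_vector_derivative (z, y2, \<chi> i. \<chi> k. G$i$k - (G$i$k \<bullet> x$k + Arow x $i$k \<bullet> z$k) *\<^sub>R x$k)) (at 0)"
      by (intro has_vector_derivative_Pair curv_deriv line_deriv proj_curve_deriv[OF Arow_T[OF xs]])
  qed
qed


lemma cond2:
  fixes x :: "real^'d^'n"
  assumes xs: "x \<in> XS" and jS: "jet1 XS FF x \<in> S1_jets XS"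
  shows "{a + b | a b. a \<in> push_tangent (jet1 XS FF) XS x \<and>
            b \<in> tangent_space (S1_jets XS) (jet1 XS FF x)} = tangent_space (J1 XS) (jet1 XS FF x)"
proof -
  have j: "jet1 XS FF x = (x, FF x, Arow x)" by (rule jet1_XS[OF xs])
  have TJ: "tangent_space (J1 XS) (x, FF x, Arow x) = Vset x (Arow x)"
    by (rule TJ1[OF xs Arow_T[OF xs]])
  have imgeq: "lin_of (Arow x) ` Tx x = FF ` Tx x"
    using lin_Arow by (auto simp: image_def)
  have xS: "x \<in> Sk_set 1 XS FF"
  proof -
    have "jet_corank XS (x, FF x, Arow x) = 1" using jS j by (simp add: S1_jets_def)
    then have "CARD('d) - dim (FF ` Tx x) = 1"
      by (simp add: jet_corank_def tangent_XS[OF xs] imgeq)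
    then show ?thesis using xs corank_XS[OF xs] by (simp add: Sk_set_def)
  qed
  obtain u eps where u: "norm u = 1" and xe: "\<And>k. x$k = eps k *\<^sub>R u"
    and e: "\<And>k. eps k = 1 \<or> eps k = -1" using S_point[OF xS] by blast
  have e2: "(eps k)^2 = 1" for k using e[of k] by auto
  have ee: "eps k * eps k = 1" for k using e[of k] by auto
  have uu: "u \<bullet> u = 1" using u by (simp add: norm_eq_1)
  show ?thesis unfolding j TJ
  proof
    show "{a + b |a b. a \<in> push_tangent (jet1 XS FF) XS x \<and> b \<in> tangent_space (S1_jets XS) (x, FF x, Arow x)}
          \<subseteq> Vset x (Arow x)"
    proof
      fix X assume "X \<in> {a + b |a b. a \<in> push_tangent (jet1 XS FF) XS x \<and> b \<in> tangent_space (S1_jets XS) (x, FF x, Arow x)}"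
      then obtain a b where X: "X = a + b" and a: "a \<in> push_tangent (jet1 XS FF) XS x"
        and b: "b \<in> tangent_space (S1_jets XS) (x, FF x, Arow x)" by blast
      have "a \<in> tangent_space (J1 XS) (x, FF x, Arow x)"
      proof -
        from a obtain \<gamma> e v where g: "e > 0" "\<gamma> 0 = x" "\<forall>t\<in>{-e<..<e}. \<gamma> t \<in> XS"
          "((jet1 XS FF \<circ> \<gamma>) has_vector_derivative a) (at 0)"
          unfolding push_tangent_def by blast
        show ?thesis unfolding tangent_space_def
        proof (intro CollectI exI conjI)
          show "e > 0" by (rule g(1))
          show "(jet1 XS FF \<circ> \<gamma>) 0 = (x, FF x, Arow x)" using g(2) j by simp
          show "\<forall>t\<in>{-e<..<e}. (jet1 XS FF \<circ> \<gamma>) t \<in> J1 XS"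
          proof
            fix t assume "t \<in> {-e<..<e}"
            then have gt: "\<gamma> t \<in> XS" using g(3) by blast
            show "(jet1 XS FF \<circ> \<gamma>) t \<in> J1 XS"
              using jet1_XS[OF gt] Arow_T[OF gt] gt by (simp add: J1_XS)
          qed
          show "((jet1 XS FF \<circ> \<gamma>) has_vector_derivative a) (at 0)" by (rule g(4))
        qed
      qed
      moreover have "b \<in> tangent_space (J1 XS) (x, FF x, Arow x)"
        using b tangent_mono[of "S1_jets XS" "J1 XS"] by (auto simp: S1_jets_def)
      ultimately show "X \<in> Vset x (Arow x)" using TJ Vset_add X by blast
    qed
  next
    show "Vset x (Arow x) \<subseteq> {a + b |a b. a \<in> push_tangent (jet1 XS FF) XS x \<and>
            b \<in> tangent_space (S1_jets XS) (x, FF x, Arow x)}"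
    proof
      fix V assume "V \<in> Vset x (Arow x)"
      then obtain w y' B where V: "V = (w, y', B)" and wT: "w \<in> Tx x"
        and BC: "\<And>i k. B$i$k \<bullet> x$k + Arow x $i$k \<bullet> w$k = 0" by (auto simp: Vset_def)
      have AT: "Arow x $i$k \<bullet> c$k = c$k$i" if "c \<in> Tx x" for i k and c :: "real^'d^'n"
        using that by (simp add: Arow_def Tx_def inner_diff_left inner_axis')
      have uw: "u \<bullet> w$k = 0" for k
      proof -
        have "x$k \<bullet> w$k = 0" using wT by (simp add: Tx_def)
        then have "eps k * (u \<bullet> w$k) = 0" using xe[of k] by simp
        then show ?thesis using e[of k] by auto
      qed
      have uB: "u \<bullet> B$i$k = - eps k * w$k$i" for i k
      proof -
        have "eps k * (B$i$k \<bullet> u) = - w$k$i" using BC[of i k] AT[OF wT, of i k] xe[of k] by simp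
        then have "eps k * (eps k * (B$i$k \<bullet> u)) = - eps k * w$k$i" by simp
        then show ?thesis using ee[of k] by (simp add: inner_commute mult.assoc[symmetric])
      qed
      define v where "v = ((\<chi> k. (- eps k) *\<^sub>R (\<Sum>i\<in>UNIV. u$i *\<^sub>R B$i$k)) :: real^'d^'n)"
      have uv: "u \<bullet> v$k = 0" for k
      proof -
        have "u \<bullet> v$k = - eps k * (\<Sum>i\<in>UNIV. u$i * (u \<bullet> B$i$k))"
          by (simp add: v_def inner_sum_right)
        also have "\<dots> = (eps k * eps k) * (\<Sum>i\<in>UNIV. u$i * w$k$i)"
          by (simp add: uB sum_distrib_left algebra_simps)
        also have "\<dots> = 0" using uw[of k] by (simp add: inner_vec_def)
        finally show ?thesis .
      qed
      have vT: "v \<in> Tx x" using uv xe by (simp add: Tx_def)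
      define z where "z = w - v"
      have zT: "z \<in> Tx x" using wT vT subspace_Tx[of x] by (simp add: z_def subspace_diff)
      define G where "G = ((\<chi> i. \<chi> k. B$i$k + (eps k * u$i) *\<^sub>R v$k + (eps k * w$k$i) *\<^sub>R u)
                           :: (real^'d^'n)^'d)"
      have Gs: "(\<Sum>i\<in>UNIV. u$i *\<^sub>R G$i) = 0"
      proof (subst vec_eq_iff, rule allI)
        fix k
        have "(\<Sum>i\<in>UNIV. u$i *\<^sub>R G$i) $ k =
              (\<Sum>i\<in>UNIV. u$i *\<^sub>R B$i$k) + (eps k * (\<Sum>i\<in>UNIV. u$i * u$i)) *\<^sub>R v$k
              + (eps k * (\<Sum>i\<in>UNIV. u$i * w$k$i)) *\<^sub>R u"
          by (simp add: G_def sum_component scaleR_add_right sum.distrib scaleR_sum_left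
              sum_distrib_left algebra_simps)
        also have "\<dots> = (\<Sum>i\<in>UNIV. u$i *\<^sub>R B$i$k) + eps k *\<^sub>R v$k"
          using uu uw[of k] by (simp add: inner_vec_def)
        also have "\<dots> = 0"
          using ee[of k] by (simp add: v_def)
        finally show "(\<Sum>i\<in>UNIV. u$i *\<^sub>R G$i) $ k = 0 $ k" by simp
      qed
      have Gx: "G$i$k \<bullet> x$k = 0" for i k
      proof -
        have "G$i$k \<bullet> x$k = eps k * (u \<bullet> B$i$k) + eps k * eps k * u$i * (u \<bullet> v$k) + eps k * eps k * w$k$i * (u \<bullet> u)"
          by (simp add: G_def xe inner_add_left inner_commute algebra_simps)
        also have "\<dots> = 0" using uB[of i k] uv[of k] uu ee[of k] by (simp add: algebra_simps)
        finally show ?thesis .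
      qed
      define pa where "pa = (v, FF v, (\<chi> i. \<chi> k. - ((v$k$i) *\<^sub>R x$k + (x$k$i) *\<^sub>R v$k)) :: (real^'d^'n)^'d)"
      define sa where "sa = (z, y' - FF v, (\<chi> i. \<chi> k. G$i$k - (G$i$k \<bullet> x$k + Arow x $i$k \<bullet> z$k) *\<^sub>R x$k) :: (real^'d^'n)^'d)"
      have pa_in: "pa \<in> push_tangent (jet1 XS FF) XS x"
        unfolding push_tangent_def pa_def
        using curv_XS[OF xs vT] curv_deriv[of x v] jet_curve_deriv[OF xs vT]
        by (intro CollectI exI[of _ "curv x v"] exI[of _ 1] exI[of _ v]) auto
      have sa_in: "sa \<in> tangent_space (S1_jets XS) (x, FF x, Arow x)"
        unfolding sa_def by (rule S1_curve[OF xs u xe e2 zT Gs])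
      have "V = pa + sa"
      proof -
        have "B$i$k = - ((v$k$i) *\<^sub>R x$k + (x$k$i) *\<^sub>R v$k) +
               (G$i$k - (G$i$k \<bullet> x$k + Arow x $i$k \<bullet> z$k) *\<^sub>R x$k)" for i k
        proof -
          have xki: "x$k$i = eps k * u$i" using xe[of k] by simp
          show ?thesis
            using Gx[of i k] AT[OF wT, of i k] AT[OF vT, of i k]
            by (simp add: G_def xe xki z_def inner_diff_right algebra_simps)
        qed
        then show ?thesis by (simp add: V pa_def sa_def z_def vec_eq_iff)
      qed
      then show "V \<in> {a + b |a b. a \<in> push_tangent (jet1 XS FF) XS x \<and>
            b \<in> tangent_space (S1_jets XS) (x, FF x, Arow x)}" using pa_in sa_in by blast
    qed
  qed
qed


theorem mainTheorem2:
  assumes "CARD('d::finite) \<ge> 2" and "odd CARD('n::finite)"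
  shows "fold_map {v :: real^'d^'n. \<forall>i. norm (v$i) = 1} (\<lambda>v. \<Sum>i\<in>UNIV. v$i)"
proof -
  have X: "{v :: real^'d^'n. \<forall>i. norm (v$i) = 1} = XS" by (simp add: XS_def)
  show ?thesis unfolding X fold_map_def
  proof (intro conjI ballI impI)
    show "sing_set XS (FF :: real^'d^'n \<Rightarrow> real^'d) = Sk_set 1 XS FF" by (rule cond1)
  next
    fix x :: "real^'d^'n" assume "x \<in> XS" "jet1 XS FF x \<in> S1_jets XS"
    then show "{a + b |a b. a \<in> push_tangent (jet1 XS FF) XS x \<and> b \<in> tangent_space (S1_jets XS) (jet1 XS FF x)} =
         tangent_space (J1 XS) (jet1 XS FF x)" by (rule cond2)
  next
    fix x :: "real^'d^'n" assume "x \<in> Sk_set 1 XS FF"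
    then show "{a + b |a b. a \<in> tangent_space (Sk_set 1 XS FF) x \<and> b \<in> {v \<in> tangent_space XS x. Dmap FF x v = 0}} =
         tangent_space XS x" by (rule cond3[OF assms(2)])
  qed
qed

end
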